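(* Let $p\ge 7$ be a prime. Then (i) $\displaystyle\sum_{k=1}^{p-1}\frac{H_{k-1}}{k^3}\equiv \sum_{k=1}^{p-1}\frac{H_k}{k^3}\equiv 0\pmod{p}$; (ii) $\displaystyle\sum_{k=1}^{p-1}\frac{H_k^3}{k}\equiv\frac{3}{2}\sum_{k=1}^{p-1}\frac{H_k^2}{k^2}\pmod{p}$; (iii) $\displaystyle\sum_{k=1}^{p-1}\frac{H_{k-1,3}}{k}\equiv \sum_{k=1}^{p-1}\frac{H_{k,3}}{k}\equiv 0\pmod{p}$; (iv) $\displaystyle\sum_{k=1}^{p-1}\frac{H_k}{k^2}\equiv \sum_{k=1}^{p-1}\frac{H_k^2}{k}\pmod{p^2}$.
   Context: For positive integers $n,m$, $H_{n,m}=\sum_{k=1}^n 1/k^m$ and $H_n=H_{n,1}$; $H_0=H_{0,m}=0$. Congruences modulo $p^e$ are taken in the ring of rationals with denominators not divisible by $p$ ($a\equiv b\pmod{p^e}$ means $(a-b)/p^e$ is a rational with denominator prime to $p$). *)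

theory Defs
  imports Complex_Main "HOL-Computational_Algebra.Primes"
begin

definition Hm :: "nat \<Rightarrow> nat \<Rightarrow> rat" where
  "Hm n m = (\<Sum>k=1..n. 1 / (of_nat k) ^ m)"

definition H :: "nat \<Rightarrow> rat" where
  "H n = Hm n 1"

definition p_integral :: "nat \<Rightarrow> rat \<Rightarrow> bool" where
  "p_integral p x \<longleftrightarrow> \<not> (int p dvd snd (quotient_of x))"

definition cong_rat :: "rat \<Rightarrow> rat \<Rightarrow> nat \<Rightarrow> nat \<Rightarrow> bool" where
  "cong_rat a b p e \<longleftrightarrow> p_integral p ((a - b) / (of_nat p) ^ e)"

end

theory Submission
  imports Defs "HOL-Number_Theory.Cong"
begin

definition pint :: "nat \<Rightarrow> rat \<Rightarrow> bool" where
  "pint p x \<longleftrightarrow> (\<exists>a b::int. \<not> int p dvd b \<and> x = of_int a / of_int b)"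

lemma p_integral_iff:
  assumes "prime p" shows "p_integral p x \<longleftrightarrow> pint p x"
proof
  assume "p_integral p x"
  obtain a b where q: "quotient_of x = (a, b)" by (cases "quotient_of x")
  then show "pint p x" using \<open>p_integral p x\<close> quotient_of_div[OF q]
    unfolding pint_def p_integral_def by auto
next
  assume "pint p x"
  then obtain a b :: int where nb: "\<not> int p dvd b" and x: "x = of_int a / of_int b"
    unfolding pint_def by auto
  have b0: "b \<noteq> 0" using nb by auto
  obtain a' b' where q: "quotient_of x = (a', b')" by (cases "quotient_of x")
  have b'0: "b' > 0" using quotient_of_denom_pos[OF q] .
  have cop: "coprime a' b'" using quotient_of_coprime[OF q] .
  have "of_int a / of_int b = (of_int a' / of_int b' :: rat)" using x quotient_of_div[OF q] by simp
  hence "of_int (a * b') = (of_int (a' * b) :: rat)" using b0 b'0 by (simp add: field_simps)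
  hence e: "a * b' = a' * b" by (simp only: of_int_eq_iff)
  hence "b' dvd a' * b" by (metis dvd_triv_right)
  hence "b' dvd b" using cop by (metis coprime_commute coprime_dvd_mult_right_iff)
  hence "\<not> int p dvd b'" using nb dvd_trans by blast
  thus "p_integral p x" unfolding p_integral_def q by simp
qed

lemma pint_of_int: "prime p \<Longrightarrow> pint p (of_int a)"
  unfolding pint_def
  by (rule_tac x=a in exI, rule_tac x=1 in exI) (auto simp: prime_gt_1_nat)

lemma pint_of_nat: "prime p \<Longrightarrow> pint p (of_nat a)"
  using pint_of_int[of p "int a"] by simp

lemma pint_numeral: "prime p \<Longrightarrow> pint p (numeral a)"
  using pint_of_nat[of p "numeral a"] by simp

lemma pint_0: "prime p \<Longrightarrow> pint p 0" using pint_of_nat[of p 0] by simp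
lemma pint_1: "prime p \<Longrightarrow> pint p 1" using pint_of_nat[of p 1] by simp

lemma pint_add: assumes "prime p" "pint p x" "pint p y" shows "pint p (x + y)"
proof -
  obtain a b where b: "\<not> int p dvd b" "x = of_int a / of_int b" using assms unfolding pint_def by auto
  obtain c d where d: "\<not> int p dvd d" "y = of_int c / of_int d" using assms unfolding pint_def by auto
  have pr: "prime (int p)" using assms by simp
  have "\<not> int p dvd b * d" using b d pr by (simp add: prime_dvd_mult_iff)
  moreover have "b \<noteq> 0" "d \<noteq> 0" using b d by auto
  hence "x + y = of_int (a*d + c*b) / of_int (b*d)" using b d by (simp add: field_simps)
  ultimately show ?thesis unfolding pint_def by blast
qed

lemma pint_mult: assumes "prime p" "pint p x" "pint p y" shows "pint p (x * y)"
proof -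
  obtain a b where b: "\<not> int p dvd b" "x = of_int a / of_int b" using assms unfolding pint_def by auto
  obtain c d where d: "\<not> int p dvd d" "y = of_int c / of_int d" using assms unfolding pint_def by auto
  have pr: "prime (int p)" using assms by simp
  have "\<not> int p dvd b * d" using b d pr by (simp add: prime_dvd_mult_iff)
  moreover have "x * y = of_int (a*c) / of_int (b*d)" using b d by (simp add: field_simps)
  ultimately show ?thesis unfolding pint_def by blast
qed

lemma pint_uminus: assumes "pint p x" shows "pint p (- x)"
proof -
  obtain a b where b: "\<not> int p dvd b" "x = of_int a / of_int b" using assms unfolding pint_def by auto
  hence "- x = of_int (-a) / of_int b" by simp
  thus ?thesis using b unfolding pint_def by blast
qed

lemma pint_diff: "prime p \<Longrightarrow> pint p x \<Longrightarrow> pint p y \<Longrightarrow> pint p (x - y)"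
  using pint_add[of p x "-y"] pint_uminus[of p y] by simp

lemma pint_pow: "prime p \<Longrightarrow> pint p x \<Longrightarrow> pint p (x ^ n)"
  by (induction n) (auto intro: pint_mult pint_1)

lemma pint_sum: "prime p \<Longrightarrow> (\<And>i. i \<in> A \<Longrightarrow> pint p (f i)) \<Longrightarrow> pint p (sum f A)"
  by (induction A rule: infinite_finite_induct) (auto intro: pint_add pint_0)

lemma pint_inv_int: assumes "\<not> int p dvd a" shows "pint p (1 / of_int a)"
  unfolding pint_def using assms by (rule_tac x=1 in exI, rule_tac x=a in exI) simp

lemma pint_inv_nat: assumes "0 < k" "k < p" shows "pint p (1 / of_nat k)"
proof -
  have "\<not> int p dvd int k" using assms by (auto dest: zdvd_imp_le)
  thus ?thesis using pint_inv_int[of p "int k"] by simp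
qed

definition pdv :: "nat \<Rightarrow> nat \<Rightarrow> rat \<Rightarrow> bool" where
  "pdv p e x \<longleftrightarrow> pint p (x / of_nat p ^ e)"

lemma cong_rat_iff: "prime p \<Longrightarrow> cong_rat a b p e \<longleftrightarrow> pdv p e (a - b)"
  unfolding cong_rat_def pdv_def by (simp add: p_integral_iff)

lemma pdv_add: "prime p \<Longrightarrow> pdv p e x \<Longrightarrow> pdv p e y \<Longrightarrow> pdv p e (x + y)"
  unfolding pdv_def using pint_add[of p "x / of_nat p ^ e" "y / of_nat p ^ e"]
  by (simp add: add_divide_distrib)

lemma pdv_uminus: "pdv p e x \<Longrightarrow> pdv p e (- x)"
  unfolding pdv_def using pint_uminus[of p "x / of_nat p ^ e"] by simp

lemma pdv_diff: "prime p \<Longrightarrow> pdv p e x \<Longrightarrow> pdv p e y \<Longrightarrow> pdv p e (x - y)"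
  using pdv_add[of p e x "-y"] pdv_uminus[of p e y] by simp

lemma pdv_0: "prime p \<Longrightarrow> pdv p e 0" unfolding pdv_def using pint_0 by simp

lemma pdv_sum: "prime p \<Longrightarrow> (\<And>i. i \<in> A \<Longrightarrow> pdv p e (f i)) \<Longrightarrow> pdv p e (sum f A)"
  by (induction A rule: infinite_finite_induct) (auto intro: pdv_add pdv_0)

lemma pdv_mult_pint: "prime p \<Longrightarrow> pdv p e x \<Longrightarrow> pint p y \<Longrightarrow> pdv p e (x * y)"
  unfolding pdv_def using pint_mult[of p "x / of_nat p ^ e" y] by (simp add: field_simps)

lemma pdv_mult_pint': "prime p \<Longrightarrow> pdv p e x \<Longrightarrow> pint p y \<Longrightarrow> pdv p e (y * x)"
  using pdv_mult_pint[of p e x y] by (simp add: mult.commute)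

lemma pdv_mult: "prime p \<Longrightarrow> pdv p e x \<Longrightarrow> pdv p f y \<Longrightarrow> pdv p (e + f) (x * y)"
  unfolding pdv_def using pint_mult[of p "x / of_nat p ^ e" "y / of_nat p ^ f"]
  by (simp add: power_add)

lemma pdv_pow: "prime p \<Longrightarrow> pdv p e x \<Longrightarrow> pdv p (e * n) (x ^ n)"
proof (induction n)
  case 0 thus ?case using pint_1 by (simp add: pdv_def)
next
  case (Suc n) thus ?case using pdv_mult[of p e x "e*n" "x^n"] by (simp add: add.commute)
qed

lemma pdv_mono: assumes "prime p" "f \<le> e" "pdv p e x" shows "pdv p f x"
proof -
  have p0: "(of_nat p :: rat) \<noteq> 0" using assms prime_gt_0_nat by auto
  have "x / of_nat p ^ f = (x / of_nat p ^ e) * of_nat (p ^ (e - f))"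
    using assms p0 by (simp add: field_simps power_add[symmetric])
  moreover have "pint p ((x / of_nat p ^ e) * of_nat (p ^ (e - f)))"
    using assms pint_mult[OF assms(1), of "x / of_nat p ^ e" "of_nat (p^(e-f))"]
    pint_of_nat[of p] unfolding pdv_def by blast
  ultimately show ?thesis unfolding pdv_def by simp
qed

lemma pdv_times_p: assumes "prime p" "pint p y" shows "pdv p 1 (of_nat p * y)"
  using assms prime_gt_0_nat[of p] unfolding pdv_def by simp

lemma pdv_0_iff: "pdv p 0 x = pint p x" unfolding pdv_def by simp

lemma pdv_cong_mult:
  assumes "prime p" "pdv p e (x - x')" "pdv p e (y - y')" "pint p x'" "pint p y"
  shows "pdv p e (x * y - x' * y')"
proof -
  have "x * y - x' * y' = (x - x') * y + x' * (y - y')" by (simp add: algebra_simps)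
  thus ?thesis using assms by (auto intro: pdv_add pdv_mult_pint pdv_mult_pint')
qed

lemma inv_cong:
  assumes "prime p" "\<not> int p dvd a" "\<not> int p dvd b" "[a = b] (mod int p)"
  shows "pdv p 1 (1 / of_int a - 1 / of_int b)"
proof -
  obtain c where c: "b - a = int p * c" using assms(4) cong_iff_dvd_diff[of b a] cong_sym
    by (metis dvdE)
  have a0: "a \<noteq> 0" "b \<noteq> 0" using assms by auto
  have "1 / of_int a - 1 / of_int b = (of_nat p :: rat) * (of_int c * (1 / of_int (a*b)))"
    using a0 by (simp add: field_simps flip: of_int_diff of_int_mult c) (simp add: c)
  moreover have "\<not> int p dvd a * b" using assms by (simp add: prime_dvd_mult_iff)
  ultimately show ?thesis using pdv_times_p[OF assms(1)] pint_mult[OF assms(1) pint_of_int[OF assms(1)] pint_inv_int]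
    by metis
qed

lemma Hm_Suc: "Hm (Suc n) m = Hm n m + 1 / of_nat (Suc n) ^ m"
  unfolding Hm_def by simp

lemma Hm_0: "Hm 0 m = 0" unfolding Hm_def by simp

lemma pint_inv_pow: "prime p \<Longrightarrow> 0 < k \<Longrightarrow> k < p \<Longrightarrow> pint p (1 / of_nat k ^ m)"
  using pint_pow[of p "1 / of_nat k" m] pint_inv_nat[of k p] by (simp add: power_one_over)

lemma pint_Hm: "prime p \<Longrightarrow> n < p \<Longrightarrow> pint p (Hm n m)"
  unfolding Hm_def by (rule pint_sum) (auto intro: pint_inv_pow)

lemma not_dvd_nat: "0 < k \<Longrightarrow> k < p \<Longrightarrow> \<not> int p dvd int k"
  by (auto dest: zdvd_imp_le)

lemma neg_refl:
  assumes "prime p" "odd m" "0 < i" "i < p"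
  shows "pdv p 1 (1 / of_nat (p - i) ^ m + 1 / of_nat i ^ m)"
proof -
  have pr: "prime (int p)" using assms by simp
  have m0: "m > 0" using assms by (auto intro!: Nat.gr0I)
  have "\<not> int p dvd int (p - i)" using not_dvd_nat[of "p-i" p] assms by simp
  hence na: "\<not> int p dvd (int (p - i)) ^ m" using prime_dvd_power_iff[OF pr m0] by simp
  have "\<not> int p dvd int i" using not_dvd_nat assms by simp
  hence nb: "\<not> int p dvd (- (int i ^ m))" using prime_dvd_power_iff[OF pr m0] by simp
  have "[int (p - i) = - int i] (mod int p)" using assms
    by (simp add: cong_iff_dvd_diff of_nat_diff)
  hence "[int (p - i) ^ m = (- int i) ^ m] (mod int p)" by (rule cong_pow)
  hence c: "[int (p - i) ^ m = - (int i ^ m)] (mod int p)" using assms(2) by simp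
  have "pdv p 1 (1 / of_int (int (p - i) ^ m) - 1 / of_int (- (int i ^ m)))"
    by (rule inv_cong[OF assms(1) na nb c])
  thus ?thesis by simp
qed

lemma half_pint: "prime p \<Longrightarrow> p \<noteq> 2 \<Longrightarrow> pint p (1/2)"
proof -
  assume "prime p" "p \<noteq> 2"
  have "\<not> int p dvd 2"
  proof
    assume "int p dvd 2"
    hence "p dvd 2" by (metis int_dvd_int_iff of_nat_numeral)
    hence "p \<le> 2" by (simp add: dvd_imp_le)
    thus False using prime_ge_2_nat[OF \<open>prime p\<close>] \<open>p \<noteq> 2\<close> by simp
  qed
  thus ?thesis using pint_inv_int[of p 2] by simp
qed

lemma Hm_full_odd:
  assumes "prime p" "p \<noteq> 2" "odd m"
  shows "pdv p 1 (Hm (p - 1) m)"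
proof -
  let ?A = "{1..p-1}"
  have r: "Hm (p-1) m = (\<Sum>k\<in>?A. 1 / of_nat (p - k) ^ m)"
  proof -
    have "Hm (p-1) m = (\<Sum>k\<in>?A. 1 / of_nat (p - 1 + 1 - k) ^ m)"
      unfolding Hm_def by (rule sum.atLeastAtMost_rev)
    also have "\<dots> = (\<Sum>k\<in>?A. 1 / of_nat (p - k) ^ m)"
      using prime_gt_0_nat[OF assms(1)] by (intro sum.cong) auto
    finally show ?thesis .
  qed
  have "2 * Hm (p-1) m = (\<Sum>k\<in>?A. 1 / of_nat (p - k) ^ m + 1 / of_nat k ^ m)"
  proof -
    have "2 * Hm (p-1) m = Hm (p-1) m + Hm (p-1) m" by simp
    also have "\<dots> = (\<Sum>k\<in>?A. 1 / of_nat (p - k) ^ m) + (\<Sum>k\<in>?A. 1 / of_nat k ^ m)"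
      using r by (simp add: Hm_def)
    finally show ?thesis by (simp add: sum.distrib)
  qed
  moreover have "pdv p 1 (\<Sum>k\<in>?A. 1 / of_nat (p - k) ^ m + 1 / of_nat k ^ m)"
  proof (rule pdv_sum[OF assms(1)])
    fix k assume "k \<in> ?A"
    show "pdv p 1 (1 / of_nat (p - k) ^ m + 1 / of_nat k ^ m)"
      by (rule neg_refl[OF assms(1) assms(3)]) (use \<open>k \<in> ?A\<close> in auto)
  qed
  ultimately have "pdv p 1 (2 * Hm (p-1) m)" by simp
  hence "pdv p 1 (2 * Hm (p-1) m * (1/2))" using pdv_mult_pint half_pint assms by blast
  thus ?thesis by simp
qed


lemma not_dvd_small: assumes "prime p" "7 \<le> p" "0 < c" "c < 7" shows "\<not> int p dvd int c"
  using not_dvd_nat[of c p] assms by simp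

lemma S4_lemma:
  assumes "prime p" "7 \<le> p"
  shows "pdv p 1 (Hm (p - 1) 4)"
proof -
  let ?A = "{1..p-1}"
  define g where "g k = (2 * k) mod p" for k
  have pr: "prime (int p)" using assms by simp
  have p0: "p > 0" using assms by simp
  have n2: "\<not> int p dvd 2" using not_dvd_small[OF assms, of 2] by simp
  have ndk: "\<not> int p dvd int (2 * k)" if "k \<in> ?A" for k
  proof -
    have "0 < k" "k < p" using that p0 by auto
    hence "\<not> int p dvd int k" using not_dvd_nat[of k p] by blast
    thus ?thesis using n2 pr by (simp add: prime_dvd_mult_iff)
  qed
  have gA: "g k \<in> ?A" if "k \<in> ?A" for k
  proof -
    have "g k < p" using p0 unfolding g_def by simp
    moreover have "g k \<noteq> 0"
    proof
      assume "g k = 0"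
      hence "p dvd 2 * k" unfolding g_def by auto
      thus False using ndk[OF that] by (metis int_dvd_int_iff)
    qed
    ultimately show ?thesis by auto
  qed
  have inj: "inj_on g ?A"
  proof
    fix k j assume k: "k \<in> ?A" and j: "j \<in> ?A" and e: "g k = g j"
    hence "[2 * k = 2 * j] (mod p)" unfolding g_def cong_def by simp
    moreover have "coprime 2 p"
      using n2 by (metis coprime_commute int_dvd_int_iff of_nat_numeral prime_imp_coprime_nat assms(1))
    ultimately have "[k = j] (mod p)" using cong_mult_lcancel_nat by blast
    thus "k = j" using k j cong_less_modulus_unique_nat[of k j p] by auto
  qed
  have sub: "g ` ?A \<subseteq> ?A" using gA by blast
  have img: "g ` ?A = ?A" using endo_inj_surj[OF _ sub inj] by simp
  have e1: "Hm (p-1) 4 = (\<Sum>k\<in>?A. 1 / of_nat (g k) ^ 4)"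
  proof -
    have "Hm (p-1) 4 = (\<Sum>k\<in>g ` ?A. 1 / of_nat k ^ 4)" unfolding Hm_def img by simp
    also have "\<dots> = (\<Sum>k\<in>?A. 1 / of_nat (g k) ^ 4)" by (rule sum.reindex_cong[OF inj refl]) simp
    finally show ?thesis .
  qed
  have e2: "(\<Sum>k\<in>?A. 1 / (of_nat (2 * k) :: rat) ^ 4) = Hm (p-1) 4 / 16"
    unfolding Hm_def by (simp add: sum_divide_distrib) (simp add: mult.commute)
  have "pdv p 1 (\<Sum>k\<in>?A. 1 / of_nat (g k) ^ 4 - 1 / of_nat (2 * k) ^ 4)"
  proof (rule pdv_sum[OF assms(1)])
    fix k assume k: "k \<in> ?A"
    have "0 < g k" "g k < p" using gA[OF k] p0 by auto
    hence "\<not> int p dvd int (g k)" using not_dvd_nat[of "g k" p] by blast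
    hence na: "\<not> int p dvd int (g k) ^ 4" using prime_dvd_power_iff[OF pr] by simp
    have "int p dvd int (2*k) ^ 4 \<longleftrightarrow> int p dvd int (2*k)" by (rule prime_dvd_power_iff[OF pr]) simp
    hence nb: "\<not> int p dvd int (2 * k) ^ 4" using ndk[OF k] by blast
    have "[g k = 2 * k] (mod p)" unfolding g_def by simp
    hence "[int (g k) = int (2 * k)] (mod int p)" using cong_int_iff by blast
    hence c: "[int (g k) ^ 4 = int (2 * k) ^ 4] (mod int p)" by (rule cong_pow)
    have "pdv p 1 (1 / of_int (int (g k) ^ 4) - 1 / of_int (int (2 * k) ^ 4))"
      by (rule inv_cong[OF assms(1) na nb c])
    thus "pdv p 1 (1 / of_nat (g k) ^ 4 - 1 / of_nat (2 * k) ^ 4)"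
      by (simp only: of_int_power of_int_of_nat_eq)
  qed
  hence "pdv p 1 (Hm (p-1) 4 - Hm (p-1) 4 / 16)"
    by (simp only: sum_subtractf e1[symmetric] e2)
  hence "pdv p 1 ((Hm (p-1) 4 - Hm (p-1) 4 / 16) * (16 * (1 / of_int 15)))"
  proof (rule pdv_mult_pint[OF assms(1)])
    have "\<not> int p dvd 15"
    proof
      assume "int p dvd 15"
      hence "int p dvd int (3 * 5)" by simp
      hence "p dvd 3 * 5" by (simp only: int_dvd_int_iff)
      hence "p dvd 3 \<or> p dvd 5" using assms(1) prime_dvd_mult_iff by blast
      moreover have "\<not> p dvd 3" using dvd_imp_le[of p 3] assms(2) by linarith
      moreover have "\<not> p dvd 5" using dvd_imp_le[of p 5] assms(2) by linarith
      ultimately show False by blast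
    qed
    thus "pint p (16 * (1 / of_int 15))"
      using pint_mult[OF assms(1) pint_numeral[OF assms(1)] pint_inv_int] by blast
  qed
  moreover have "(h - h / 16) * (16 * (1 / of_int 15)) = h" for h :: rat by simp
  ultimately show ?thesis by metis
qed

lemma H3_term:
  assumes "prime p" "0 < k" "k < p"
  shows "pdv p 2 (1 / of_nat (p - k) ^ 3 + 1 / of_nat k ^ 3 + 3 * of_nat p / of_nat k ^ 4)"
proof -
  have p0: "p > 0" using assms by simp
  define q :: rat where "q = of_nat p"
  define x :: rat where "x = of_nat k"
  have x0: "x \<noteq> 0" using assms unfolding x_def by auto
  have qx: "q - x \<noteq> 0" using assms unfolding x_def q_def by auto
  have pk: "(of_nat (p - k) :: rat) = q - x" using assms unfolding q_def x_def by (subst of_nat_diff) auto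
  define y where "y = q - x"
  have y0: "y \<noteq> 0" using qx unfolding y_def .
  have qq: "q = x + y" unfolding y_def by simp
  define Z where "Z = (3 * q ^ 2 - 8 * q * x + 6 * x ^ 2) * ((1 / x) ^ 4 * (1 / y) ^ 3)"
  have poly: "x^4 + x*y^3 + 3*(x+y)*y^3 = (x+y)^2*(3*(x+y)^2-8*(x+y)*x+6*x^2)"
    by (simp add: algebra_simps power2_eq_square power3_eq_cube power4_eq_xxxx)
  have "1 / y ^ 3 + 1 / x ^ 3 + 3 * (x+y) / x ^ 4 = (x^4 + x*y^3 + 3*(x+y)*y^3) / (x^4 * y^3)"
    using x0 y0 by (simp add: field_simps power2_eq_square power3_eq_cube power4_eq_xxxx)
  also have "\<dots> = (x+y)^2*(3*(x+y)^2-8*(x+y)*x+6*x^2) / (x^4 * y^3)" by (simp only: poly)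
  also have "\<dots> = (x+y) ^ 2 * ((3 * (x+y) ^ 2 - 8 * (x+y) * x + 6 * x ^ 2) * ((1 / x) ^ 4 * (1 / y) ^ 3))"
    by (simp add: power_one_over)
  finally have alg: "1 / y ^ 3 + 1 / x ^ 3 + 3 * q / x ^ 4 = q ^ 2 * Z"
    unfolding Z_def qq .
  have i1: "pint p (1 / x)" unfolding x_def using pint_inv_nat[of k p] assms by blast
  have i2: "pint p (1 / y)" unfolding y_def pk[symmetric] using pint_inv_nat[of "p - k" p] assms by simp
  have "3 * q ^ 2 - 8 * q * x + 6 * x ^ 2 = of_int (3 * int p ^ 2 - 8 * int p * int k + 6 * int k ^ 2)"
    unfolding q_def x_def by simp
  hence i3: "pint p (3 * q ^ 2 - 8 * q * x + 6 * x ^ 2)" by (simp only: pint_of_int[OF assms(1)])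
  have pi: "pint p Z" unfolding Z_def using i1 i2 i3
    by (intro pint_mult[OF assms(1)] pint_pow[OF assms(1)])
  have qn: "q ^ 2 * Z / of_nat p ^ 2 = Z" using p0 unfolding q_def by simp
  have "pdv p 2 (q ^ 2 * Z)" unfolding pdv_def qn by (rule pi)
  hence "pdv p 2 (1 / y ^ 3 + 1 / x ^ 3 + 3 * q / x ^ 4)" unfolding alg .
  thus ?thesis unfolding y_def by (simp only: pk q_def x_def)
qed

lemma H3_lemma:
  assumes "prime p" "7 \<le> p"
  shows "pdv p 2 (Hm (p - 1) 3)"
proof -
  let ?A = "{1..p-1}"
  have p0: "p > 0" using assms by simp
  have r: "Hm (p-1) 3 = (\<Sum>k\<in>?A. 1 / of_nat (p - k) ^ 3)"
  proof -
    have "Hm (p-1) 3 = (\<Sum>k\<in>?A. 1 / of_nat (p - 1 + 1 - k) ^ 3)"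
      unfolding Hm_def by (rule sum.atLeastAtMost_rev)
    also have "\<dots> = (\<Sum>k\<in>?A. 1 / of_nat (p - k) ^ 3)"
      using p0 by (intro sum.cong) auto
    finally show ?thesis .
  qed
  have s4: "3 * of_nat p * Hm (p-1) 4 = (\<Sum>k\<in>?A. 3 * of_nat p / of_nat k ^ 4)"
    unfolding Hm_def by (simp add: sum_distrib_left)
  have s3: "Hm (p-1) 3 = (\<Sum>k\<in>?A. 1 / of_nat k ^ 3)" unfolding Hm_def ..
  have e: "2 * Hm (p-1) 3 + 3 * of_nat p * Hm (p-1) 4
      = (\<Sum>k\<in>?A. 1 / of_nat (p - k) ^ 3 + 1 / of_nat k ^ 3 + 3 * of_nat p / of_nat k ^ 4)"
  proof -
    have "2 * Hm (p-1) 3 + 3 * of_nat p * Hm (p-1) 4 = Hm (p-1) 3 + Hm (p-1) 3 + 3 * of_nat p * Hm (p-1) 4"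
      by (simp only: mult_2)
    also have "\<dots> = (\<Sum>k\<in>?A. 1 / of_nat (p - k) ^ 3) + (\<Sum>k\<in>?A. 1 / of_nat k ^ 3)
        + (\<Sum>k\<in>?A. 3 * of_nat p / of_nat k ^ 4)"
      by (rule arg_cong2[where f="(+)"], rule arg_cong2[where f="(+)"], rule r, rule s3, rule s4)
    finally show ?thesis by (simp only: sum.distrib)
  qed
  have "pdv p 2 (\<Sum>k\<in>?A. 1 / of_nat (p - k) ^ 3 + 1 / of_nat k ^ 3 + 3 * of_nat p / of_nat k ^ 4)"
  proof (rule pdv_sum[OF assms(1)])
    fix k assume k: "k \<in> ?A"
    show "pdv p 2 (1 / of_nat (p - k) ^ 3 + 1 / of_nat k ^ 3 + 3 * of_nat p / of_nat k ^ 4)"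
      by (rule H3_term[OF assms(1)]) (use k in auto)
  qed
  hence a: "pdv p 2 (2 * Hm (p-1) 3 + 3 * of_nat p * Hm (p-1) 4)" unfolding e .
  have b: "pdv p 2 (3 * of_nat p * Hm (p-1) 4)"
  proof -
    have "pdv p (1 + 1) (of_nat p * 1 * Hm (p-1) 4)"
      by (rule pdv_mult[OF assms(1) pdv_times_p[OF assms(1) pint_1[OF assms(1)]] S4_lemma[OF assms]])
    hence "pdv p 2 (of_nat p * Hm (p-1) 4)" by (simp only: one_add_one mult_1_right)
    hence "pdv p 2 (of_nat p * Hm (p-1) 4 * 3)" using pdv_mult_pint[OF assms(1) _ pint_numeral[OF assms(1)]] by blast
    thus ?thesis by (simp only: ac_simps)
  qed
  have "pdv p 2 (2 * Hm (p-1) 3 + 3 * of_nat p * Hm (p-1) 4 - 3 * of_nat p * Hm (p-1) 4)"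
    by (rule pdv_diff[OF assms(1) a b])
  hence "pdv p 2 (2 * Hm (p-1) 3)" by (simp only: add_diff_cancel_right')
  hence "pdv p 2 (2 * Hm (p-1) 3 * (1/2))"
  proof -
    have "p \<noteq> 2" using assms by simp
    thus ?thesis using pdv_mult_pint[OF assms(1) \<open>pdv p 2 (2 * Hm (p-1) 3)\<close> half_pint[OF assms(1)]] by blast
  qed
  thus ?thesis by simp
qed

lemma Hm_refl:
  assumes "prime p" "odd m" "pdv p 1 (Hm (p - 1) m)"
  shows "k \<le> p - 1 \<Longrightarrow> pdv p 1 (Hm (p - 1 - k) m - Hm k m)"
proof (induction k)
  case 0 thus ?case using assms by (simp add: Hm_0)
next
  case (Suc k)
  define n where "n = p - 1 - Suc k"
  have n: "p - 1 - k = Suc n" using Suc.prems unfolding n_def by simp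
  have ps: "Suc n = p - Suc k" using Suc.prems unfolding n_def by simp
  have ih: "pdv p 1 (Hm (Suc n) m - Hm k m)" using Suc.IH Suc.prems n by simp
  have nr: "pdv p 1 (1 / of_nat (p - Suc k) ^ m + 1 / of_nat (Suc k) ^ m)"
    by (rule neg_refl[OF assms(1) assms(2)]) (use Suc.prems in auto)
  have "Hm n m - Hm (Suc k) m
     = (Hm (Suc n) m - Hm k m) - (1 / of_nat (p - Suc k) ^ m + 1 / of_nat (Suc k) ^ m)"
    unfolding Hm_Suc ps[symmetric] by simp
  hence "pdv p 1 (Hm n m - Hm (Suc k) m)" using pdv_diff[OF assms(1) ih nr] by simp
  thus ?case unfolding n_def .
qed

lemma refl_main:
  assumes "prime p" "odd m" "odd j" "pdv p 1 (Hm (p - 1) m)"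
  shows "pdv p 1 ((\<Sum>k=1..p-1. Hm (k-1) m / of_nat k ^ j) + (\<Sum>k=1..p-1. Hm k m / of_nat k ^ j))"
proof -
  let ?A = "{1..p-1}"
  have p0: "p > 0" using assms by (simp add: prime_gt_0_nat)
  have r: "(\<Sum>k\<in>?A. Hm (k-1) m / of_nat k ^ j) = (\<Sum>k\<in>?A. Hm (p - 1 - k) m / of_nat (p - k) ^ j)"
  proof -
    have "(\<Sum>k\<in>?A. Hm (k-1) m / of_nat k ^ j) = (\<Sum>k\<in>?A. Hm (p - 1 + 1 - k - 1) m / of_nat (p - 1 + 1 - k) ^ j)"
      by (rule sum.atLeastAtMost_rev)
    also have "\<dots> = (\<Sum>k\<in>?A. Hm (p - 1 - k) m / of_nat (p - k) ^ j)"
      using p0 by (intro sum.cong refl) (simp add: diff_diff_add add.commute)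
    finally show ?thesis .
  qed
  have "pdv p 1 (\<Sum>k\<in>?A. Hm (p - 1 - k) m / of_nat (p - k) ^ j + Hm k m / of_nat k ^ j)"
  proof (rule pdv_sum[OF assms(1)])
    fix k assume k: "k \<in> ?A"
    have "pdv p 1 (Hm (p - 1 - k) m * (1 / of_nat (p - k) ^ j) - Hm k m * (- (1 / of_nat k ^ j)))"
    proof (rule pdv_cong_mult[OF assms(1)])
      show "pdv p 1 (Hm (p - 1 - k) m - Hm k m)" using Hm_refl[OF assms(1,2,4)] k by simp
      have "pdv p 1 (1 / of_nat (p - k) ^ j + 1 / of_nat k ^ j)"
        by (rule neg_refl[OF assms(1,3)]) (use k in auto)
      thus "pdv p 1 (1 / of_nat (p - k) ^ j - - (1 / of_nat k ^ j))" by simp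
      show "pint p (Hm k m)" by (rule pint_Hm[OF assms(1)]) (use k in auto)
      show "pint p (1 / of_nat (p - k) ^ j)" by (rule pint_inv_pow[OF assms(1)]) (use k in auto)
    qed
    thus "pdv p 1 (Hm (p - 1 - k) m / of_nat (p - k) ^ j + Hm k m / of_nat k ^ j)" by simp
  qed
  thus ?thesis unfolding r sum.distrib .
qed

lemma tele: fixes n :: nat and f :: "nat \<Rightarrow> rat" shows "(\<Sum>k=1..n. f k - f (k - 1)) = f n - f 0"
  by (induction n) (simp_all add: sum.cl_ivl_Suc)

lemma H_Suc': "0 < k \<Longrightarrow> H (k - 1) = H k - 1 / of_nat k"
  unfolding H_def using Hm_Suc[of "k - 1" 1] by simp

lemma Hm_Suc': "0 < k \<Longrightarrow> Hm (k - 1) m = Hm k m - 1 / of_nat k ^ m"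
  using Hm_Suc[of "k - 1" m] by simp

lemma quart: fixes h x :: rat shows
  "h ^ 4 - (h - 1 / x) ^ 4 = 4 * (h ^ 3 / x) - 6 * (h ^ 2 / x ^ 2) + 4 * (h / x ^ 3) - 1 / x ^ 4"
proof -
  have "h ^ 4 - (h - t) ^ 4 = 4 * (h ^ 3 * t) - 6 * (h ^ 2 * t ^ 2) + 4 * (h * t ^ 3) - t ^ 4" for t :: rat
    by (simp add: algebra_simps power2_eq_square power3_eq_cube power4_eq_xxxx)
  from this[of "1/x"] show ?thesis by (simp add: power_one_over)
qed

lemma cub: fixes h x :: rat shows
  "h ^ 3 - (h - 1 / x) ^ 3 = 3 * (h ^ 2 / x) - 3 * (h / x ^ 2) + 1 / x ^ 3"
proof -
  have "h ^ 3 - (h - t) ^ 3 = 3 * (h ^ 2 * t) - 3 * (h * t ^ 2) + t ^ 3" for t :: rat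
    by (simp add: algebra_simps power2_eq_square power3_eq_cube)
  from this[of "1/x"] show ?thesis by (simp add: power_one_over)
qed

theorem lemma2p3:
  fixes p :: nat
  assumes "prime p" and "p \<ge> 7"
  shows "cong_rat (\<Sum>k=1..p-1. H (k-1) / of_nat k ^ 3) 0 p 1
       \<and> cong_rat (\<Sum>k=1..p-1. H k / of_nat k ^ 3) 0 p 1
       \<and> cong_rat (\<Sum>k=1..p-1. H k ^ 3 / of_nat k)
                  (3/2 * (\<Sum>k=1..p-1. H k ^ 2 / of_nat k ^ 2)) p 1
       \<and> cong_rat (\<Sum>k=1..p-1. Hm (k-1) 3 / of_nat k) 0 p 1
       \<and> cong_rat (\<Sum>k=1..p-1. Hm k 3 / of_nat k) 0 p 1
       \<and> cong_rat (\<Sum>k=1..p-1. H k / of_nat k ^ 2)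
                  (\<Sum>k=1..p-1. H k ^ 2 / of_nat k) p 2"
proof -
  note pr = assms(1)
  have p2: "p \<noteq> 2" using assms by simp
  have p0: "p > 0" using assms by simp
  let ?A = "{1..p-1}"
  define S4 where "S4 = Hm (p-1) 4"
  have S4s: "S4 = (\<Sum>k\<in>?A. 1 / of_nat k ^ 4)" unfolding S4_def Hm_def ..
  have dS4: "pdv p 1 S4" unfolding S4_def using S4_lemma[OF assms] .
  have h2: "pint p (1/2)" using half_pint[OF pr p2] .
  have gen: "pdv p 1 (\<Sum>k\<in>?A. Hm (k-1) m / of_nat k ^ j) \<and> pdv p 1 (\<Sum>k\<in>?A. Hm k m / of_nat k ^ j)"
    if mj: "odd m" "odd j" "m + j = 4" for m j
  proof -
    define A where "A = (\<Sum>k\<in>?A. Hm (k-1) m / of_nat k ^ j)"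
    define B where "B = (\<Sum>k\<in>?A. Hm k m / of_nat k ^ j)"
    have hm: "pdv p 1 (Hm (p-1) m)" using Hm_full_odd[OF pr p2 mj(1)] .
    have AB: "pdv p 1 (A + B)" unfolding A_def B_def using refl_main[OF pr mj(1,2) hm] .
    have BA: "B = A + S4"
    proof -
      have "B - A = (\<Sum>k\<in>?A. Hm k m / of_nat k ^ j - Hm (k-1) m / of_nat k ^ j)"
        unfolding A_def B_def by (simp add: sum_subtractf)
      also have "\<dots> = (\<Sum>k\<in>?A. 1 / of_nat k ^ 4)"
      proof (rule sum.cong[OF refl])
        fix k assume k: "k \<in> ?A"
        have k0: "(of_nat k :: rat) \<noteq> 0" using k by auto
        have "Hm k m / of_nat k ^ j - Hm (k-1) m / of_nat k ^ j = (1 / of_nat k ^ m) / of_nat k ^ j"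
          using Hm_Suc'[of k m] k by (simp add: diff_divide_distrib)
        also have "\<dots> = 1 / of_nat k ^ 4" using mj(3) k0 by (simp add: power_add[symmetric])
        finally show "Hm k m / of_nat k ^ j - Hm (k-1) m / of_nat k ^ j = 1 / of_nat k ^ 4" .
      qed
      finally show ?thesis using S4s by simp
    qed
    have "pdv p 1 (((A + B) - S4) * (1/2))"
      by (rule pdv_mult_pint[OF pr pdv_diff[OF pr AB dS4] h2])
    moreover have "((A + B) - S4) * (1/2) = A" using BA by simp
    ultimately have dA: "pdv p 1 A" by (simp only:)
    have dB: "pdv p 1 B" unfolding BA by (rule pdv_add[OF pr dA dS4])
    show ?thesis using dA dB unfolding A_def B_def by simp
  qed
  have g1: "pdv p 1 (\<Sum>k\<in>?A. H (k-1) / of_nat k ^ 3) \<and> pdv p 1 (\<Sum>k\<in>?A. H k / of_nat k ^ 3)"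
    using gen[of 1 3] unfolding H_def by simp
  have g3: "pdv p 1 (\<Sum>k\<in>?A. Hm (k-1) 3 / of_nat k) \<and> pdv p 1 (\<Sum>k\<in>?A. Hm k 3 / of_nat k)"
    using gen[of 3 1] by simp
  have dH: "pdv p 1 (H (p-1))" unfolding H_def using Hm_full_odd[OF pr p2, of 1] by simp
  define X where "X = (\<Sum>k\<in>?A. H k ^ 3 / of_nat k)"
  define Y where "Y = (\<Sum>k\<in>?A. H k ^ 2 / of_nat k ^ 2)"
  define B1 where "B1 = (\<Sum>k\<in>?A. H k / of_nat k ^ 3)"
  have tel4: "H (p-1) ^ 4 = 4 * X - 6 * Y + 4 * B1 - S4"
  proof -
    have "H (p-1) ^ 4 = (\<Sum>k\<in>?A. H k ^ 4 - H (k-1) ^ 4)"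
      using tele[of "\<lambda>k. H k ^ 4" "p-1"] by (simp add: H_def Hm_0)
    also have "\<dots> = (\<Sum>k\<in>?A. 4 * (H k ^ 3 / of_nat k) - 6 * (H k ^ 2 / of_nat k ^ 2)
        + 4 * (H k / of_nat k ^ 3) - 1 / of_nat k ^ 4)"
    proof (rule sum.cong[OF refl])
      fix k assume k: "k \<in> ?A"
      have k_pos: "0 < k" using k by auto
      show "H k ^ 4 - H (k-1) ^ 4 = 4 * (H k ^ 3 / of_nat k) - 6 * (H k ^ 2 / of_nat k ^ 2)
        + 4 * (H k / of_nat k ^ 3) - 1 / of_nat k ^ 4"
        unfolding H_Suc'[of k, OF k_pos] by (rule quart)
    qed
    also have "\<dots> = 4 * X - 6 * Y + 4 * B1 - S4"
      unfolding X_def Y_def B1_def S4s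
      by (simp add: sum.distrib sum_subtractf sum_distrib_left)
    finally show ?thesis .
  qed
  have "pdv p (1 * 4) (H (p-1) ^ 4)" by (rule pdv_pow[OF pr dH])
  hence d4: "pdv p 1 (H (p-1) ^ 4)" by (intro pdv_mono[OF pr, of 1 "1*4"]) simp_all
  have dB1: "pdv p 1 (4 * B1)" unfolding B1_def using g1 pdv_mult_pint'[OF pr _ pint_numeral[OF pr]] by blast
  have "pdv p 1 (H (p-1) ^ 4 - 4 * B1 + S4)" using pdv_add[OF pr pdv_diff[OF pr d4 dB1] dS4] .
  moreover have "H (p-1) ^ 4 - 4 * B1 + S4 = 4 * X - 6 * Y" unfolding tel4 by simp
  ultimately have "pdv p 1 (4 * X - 6 * Y)" by (simp only:)
  hence "pdv p 1 ((4 * X - 6 * Y) * ((1/2)^2))" by (rule pdv_mult_pint[OF pr _ pint_pow[OF pr h2]])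
  hence ii: "pdv p 1 (X - 3/2 * Y)" by (simp add: algebra_simps power2_eq_square)
  define W where "W = (\<Sum>k\<in>?A. H k / of_nat k ^ 2)"
  define Z where "Z = (\<Sum>k\<in>?A. H k ^ 2 / of_nat k)"
  define H3 where "H3 = Hm (p-1) 3"
  have H3s: "H3 = (\<Sum>k\<in>?A. 1 / of_nat k ^ 3)" unfolding H3_def Hm_def ..
  have tel3: "H (p-1) ^ 3 = 3 * Z - 3 * W + H3"
  proof -
    have "H (p-1) ^ 3 = (\<Sum>k\<in>?A. H k ^ 3 - H (k-1) ^ 3)"
      using tele[of "\<lambda>k. H k ^ 3" "p-1"] by (simp add: H_def Hm_0)
    also have "\<dots> = (\<Sum>k\<in>?A. 3 * (H k ^ 2 / of_nat k) - 3 * (H k / of_nat k ^ 2) + 1 / of_nat k ^ 3)"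
    proof (rule sum.cong[OF refl])
      fix k assume k: "k \<in> ?A"
      have k_pos: "0 < k" using k by auto
      show "H k ^ 3 - H (k-1) ^ 3 = 3 * (H k ^ 2 / of_nat k) - 3 * (H k / of_nat k ^ 2) + 1 / of_nat k ^ 3"
        unfolding H_Suc'[of k, OF k_pos] by (rule cub)
    qed
    also have "\<dots> = 3 * Z - 3 * W + H3"
      unfolding Z_def W_def H3s
      by (simp add: sum.distrib sum_subtractf sum_distrib_left)
    finally show ?thesis .
  qed
  have "pdv p (1 * 3) (H (p-1) ^ 3)" by (rule pdv_pow[OF pr dH])
  hence d3: "pdv p 2 (H (p-1) ^ 3)" by (intro pdv_mono[OF pr, of 2 "1*3"]) simp_all
  have dH3: "pdv p 2 H3" unfolding H3_def using H3_lemma[OF assms] .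
  have "\<not> int p dvd 3" using not_dvd_small[OF assms, of 3] by simp
  hence i3: "pint p (1 / of_int 3)" by (rule pint_inv_int)
  have "pdv p 2 ((H3 - H (p-1) ^ 3) * (1 / of_int 3))"
    by (rule pdv_mult_pint[OF pr pdv_diff[OF pr dH3 d3] i3])
  hence iv: "pdv p 2 (W - Z)" unfolding tel3 by (simp add: algebra_simps)
  show ?thesis
    unfolding cong_rat_iff[OF pr]
    using g1 g3 ii iv unfolding X_def Y_def W_def Z_def by simp
qed

end
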